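(* Let $0<\lambda\le\lambda_0$. Let $\boldsymbol\alpha_0^\star$ be the optimal solution of $\max_{\boldsymbol\alpha\ge\mathbf0}D_{\lambda_0}(\boldsymbol\alpha)$, and let $\boldsymbol\alpha_0\in\mathbb R^{2nK}$ and $\epsilon\ge0$ satisfy $\|\boldsymbol\alpha_0-\boldsymbol\alpha_0^\star\|_2\le\epsilon$. Let $\mathbf m^\star$ be the optimal solution of $\min_{\mathbf m\ge\mathbf0}P_\lambda(\mathbf m)$. For $k\in[p]$ define $$\lambda_a=\frac{\lambda_0\big(2\epsilon\|\mathbf C_{k,:}\|_2+\|\boldsymbol\alpha_0\|_2\|\mathbf C_{k,:}\|_2+\mathbf C_{k,:}\boldsymbol\alpha_0\big)}{2\lambda_0+\|\boldsymbol\alpha_0\|_2\|\mathbf C_{k,:}\|_2-\mathbf C_{k,:}\boldsymbol\alpha_0}.$$ If $\lambda_a\le\lambda\le\lambda_0$, then $m^\star_k=0$.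
   Context: Let $n,K,p\ge1$ be integers, $[n]=\{1,\dots,n\}$. For each $i\in[n]$ let $\mathbf x_i\in\mathbb R^p$ have nonnegative entries and let $\mathcal D_i,\mathcal S_i\subseteq[n]$ be sets of size $K$. Put $\mathbf c_{ij}=(\mathbf x_i-\mathbf x_j)\circ(\mathbf x_i-\mathbf x_j)$ (entrywise product). Vectors in $\mathbb R^{2nK}$ are indexed by the pairs $(i,l)$, $l\in\mathcal D_i$ ("different-class pairs") and $(i,j)$, $j\in\mathcal S_i$ ("same-class pairs"). $\mathbf C\in\mathbb R^{p\times2nK}$ has column $\mathbf c_{il}$ for each different-class pair and $-\mathbf c_{ij}$ for each same-class pair; $\mathbf C_{k,:}$ is its $k$-th row. Fix $L\ge U\ge0$, $\eta>0$; let $\mathbf t\in\mathbb R^{2nK}$ have entry $L$ at different-class pairs and $-U$ at same-class pairs; $\ell_s(x)=([s-x]_+)^2$ with $[z]_+=\max\{z,0\}$ (entrywise for vectors); $\mathbf1$ is the all-ones vector. For $\lambda>0$, $$P_\lambda(\mathbf m)=\sum_{i\in[n]}\Big[\sum_{l\in\mathcal D_i}\ell_L(\mathbf m^\top\mathbf c_{il})+\sum_{j\in\mathcal S_i}\ell_{-U}(-\mathbf m^\top\mathbf c_{ij})\Big]+\lambda\Big(\mathbf m^\top\mathbf1+\frac\eta2\|\mathbf m\|_2^2\Big)\ (\mathbf m\in\mathbb R^p_{\ge0}),$$ $$D_\lambda(\boldsymbol\alpha)=-\frac14\|\boldsymbol\alpha\|_2^2+\mathbf t^\top\boldsymbol\alpha-\frac{\lambda\eta}2\Big\|\frac1{\lambda\eta}[\mathbf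 C\boldsymbol\alpha-\lambda\mathbf1]_+\Big\|_2^2\ (\boldsymbol\alpha\in\mathbb R^{2nK}_{\ge0}).$$ *)

theory Defs
  imports "HOL-Analysis.Analysis"
begin

text \<open>Data: x i k is the k-th entry of x_i (i in {1..n}, k in {1..p}).
  Dm i = D_i (different-class neighbours), Sm i = S_i (same-class neighbours).
  Coordinates of R^{2nK} are tagged pairs: (True,i,l) for l in D_i and
  (False,i,j) for j in S_i.\<close>

definition pair_idx :: "nat \<Rightarrow> (nat \<Rightarrow> nat set) \<Rightarrow> (nat \<Rightarrow> nat set) \<Rightarrow> (bool \<times> nat \<times> nat) set" where
  "pair_idx n Dm Sm = {(True, i, l) | i l. i \<in> {1..n} \<and> l \<in> Dm i}
                    \<union> {(False, i, j) | i j. i \<in> {1..n} \<and> j \<in> Sm i}"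

definition cvec :: "(nat \<Rightarrow> nat \<Rightarrow> real) \<Rightarrow> nat \<Rightarrow> nat \<Rightarrow> nat \<Rightarrow> real" where
  "cvec x i j k = (x i k - x j k) * (x i k - x j k)"

definition Cmat :: "(nat \<Rightarrow> nat \<Rightarrow> real) \<Rightarrow> nat \<Rightarrow> bool \<times> nat \<times> nat \<Rightarrow> real" where
  "Cmat x k q = (case q of (b, i, j) \<Rightarrow> if b then cvec x i j k else - cvec x i j k)"

definition tvec :: "real \<Rightarrow> real \<Rightarrow> bool \<times> nat \<times> nat \<Rightarrow> real" where
  "tvec L U q = (if fst q then L else - U)"

definition pos_part :: "real \<Rightarrow> real" where
  "pos_part z = max z 0"

definition sq_hinge :: "real \<Rightarrow> real \<Rightarrow> real" where
  "sq_hinge s z = (pos_part (s - z))\<^sup>2"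

definition primal_obj ::
  "nat \<Rightarrow> nat \<Rightarrow> (nat \<Rightarrow> nat \<Rightarrow> real) \<Rightarrow> (nat \<Rightarrow> nat set) \<Rightarrow> (nat \<Rightarrow> nat set)
    \<Rightarrow> real \<Rightarrow> real \<Rightarrow> real \<Rightarrow> real \<Rightarrow> (nat \<Rightarrow> real) \<Rightarrow> real" where
  "primal_obj n p x Dm Sm L U eta lam m =
     (\<Sum>i\<in>{1..n}. (\<Sum>l\<in>Dm i. sq_hinge L (\<Sum>k\<in>{1..p}. m k * cvec x i l k))
                 + (\<Sum>j\<in>Sm i. sq_hinge (- U) (- (\<Sum>k\<in>{1..p}. m k * cvec x i j k))))
     + lam * ((\<Sum>k\<in>{1..p}. m k) + eta / 2 * (\<Sum>k\<in>{1..p}. (m k)\<^sup>2))"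

definition primal_feasible :: "nat \<Rightarrow> (nat \<Rightarrow> real) \<Rightarrow> bool" where
  "primal_feasible p m \<longleftrightarrow> (\<forall>k\<in>{1..p}. m k \<ge> 0) \<and> (\<forall>k. k \<notin> {1..p} \<longrightarrow> m k = 0)"

definition dual_obj ::
  "nat \<Rightarrow> nat \<Rightarrow> (nat \<Rightarrow> nat \<Rightarrow> real) \<Rightarrow> (nat \<Rightarrow> nat set) \<Rightarrow> (nat \<Rightarrow> nat set)
    \<Rightarrow> real \<Rightarrow> real \<Rightarrow> real \<Rightarrow> real \<Rightarrow> (bool \<times> nat \<times> nat \<Rightarrow> real) \<Rightarrow> real" where
  "dual_obj n p x Dm Sm L U eta lam a =
     (let I = pair_idx n Dm Sm in
       - 1/4 * (\<Sum>q\<in>I. (a q)\<^sup>2) + (\<Sum>q\<in>I. tvec L U q * a q)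
       - lam * eta / 2 *
         (\<Sum>k\<in>{1..p}. ((1 / (lam * eta)) * pos_part ((\<Sum>q\<in>I. Cmat x k q * a q) - lam))\<^sup>2))"

definition dual_feasible :: "nat \<Rightarrow> (nat \<Rightarrow> nat set) \<Rightarrow> (nat \<Rightarrow> nat set) \<Rightarrow> (bool \<times> nat \<times> nat \<Rightarrow> real) \<Rightarrow> bool" where
  "dual_feasible n Dm Sm a \<longleftrightarrow>
     (\<forall>q\<in>pair_idx n Dm Sm. a q \<ge> 0) \<and> (\<forall>q. q \<notin> pair_idx n Dm Sm \<longrightarrow> a q = 0)"

definition vnorm :: "(bool \<times> nat \<times> nat) set \<Rightarrow> (bool \<times> nat \<times> nat \<Rightarrow> real) \<Rightarrow> real" where
  "vnorm I a = sqrt (\<Sum>q\<in>I. (a q)\<^sup>2)"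

end

theory Submission
  imports Defs
begin

definition sqp :: "real \<Rightarrow> real" where "sqp z = (pos_part z)\<^sup>2"

lemma sqp_upper: "sqp (z + d) \<le> sqp z + 2 * pos_part z * d + d\<^sup>2"
proof (cases "z \<ge> 0"; cases "z + d \<ge> 0")
  assume "z \<ge> 0" "z + d \<ge> 0" thus ?thesis by (simp add: sqp_def pos_part_def power2_eq_square algebra_simps)
next
  assume "z \<ge> 0" "\<not> z + d \<ge> 0"
  hence "0 \<le> (z+d)\<^sup>2" by simp
  thus ?thesis using \<open>z \<ge> 0\<close> \<open>\<not> z + d \<ge> 0\<close> by (simp add: sqp_def pos_part_def power2_eq_square algebra_simps)
next
  assume a: "\<not> z \<ge> 0" "z + d \<ge> 0"
  hence "(z+d) * (z+d) \<le> d * d" by (intro mult_mono) auto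
  thus ?thesis using a by (simp add: sqp_def pos_part_def power2_eq_square algebra_simps)
next
  assume "\<not> z \<ge> 0" "\<not> z + d \<ge> 0" thus ?thesis by (simp add: sqp_def pos_part_def power2_eq_square algebra_simps)
qed

lemma small_theta:
  fixes G M :: real
  assumes "\<And>\<theta>. 0 < \<theta> \<Longrightarrow> \<theta> \<le> 1 \<Longrightarrow> 0 \<le> \<theta> * G + \<theta>\<^sup>2 * M"
  shows "0 \<le> G"
proof (rule ccontr)
  assume "\<not> 0 \<le> G"
  define th where "th = min 1 (- G / (2 * (\<bar>M\<bar> + 1)))"
  have "0 < - G / (2 * (\<bar>M\<bar> + 1))" by (rule divide_pos_pos) (use \<open>\<not> 0 \<le> G\<close> in auto)
  hence th0: "0 < th" unfolding th_def min_def by auto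
  have th1: "th \<le> 1" by (simp add: th_def)
  have D: "0 < 2 * (\<bar>M\<bar> + 1)" by simp
  have "th \<le> - G / (2 * (\<bar>M\<bar> + 1))" unfolding th_def by (rule min.cobounded2)
  hence "th * (2 * (\<bar>M\<bar> + 1)) \<le> - G" using pos_le_divide_eq[OF D] by blast
  have "th * M \<le> th * \<bar>M\<bar>" by (rule mult_left_mono) (use th0 in auto)
  moreover have "th * \<bar>M\<bar> < th * (2 * (\<bar>M\<bar> + 1))" using th0 by (intro mult_strict_left_mono) auto
  ultimately have "G + th * M < 0" using \<open>th * (2 * (\<bar>M\<bar> + 1)) \<le> - G\<close> by linarith
  hence "th * (G + th * M) < 0" by (rule mult_pos_neg[OF th0])
  moreover have "th * G + th\<^sup>2 * M = th * (G + th * M)" by (simp add: power2_eq_square algebra_simps)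
  ultimately have "th * G + th\<^sup>2 * M < 0" by simp
  thus False using assms th0 th1 by fastforce
qed

lemma finite_pair_idx:
  assumes "\<And>i. i \<in> {1..n} \<Longrightarrow> finite (Dm i) \<and> finite (Sm i)"
  shows "finite (pair_idx n Dm Sm)"
proof -
  have "pair_idx n Dm Sm = (\<lambda>(i,l). (True,i,l)) ` (SIGMA i:{1..n}. Dm i) \<union> (\<lambda>(i,l). (False,i,l)) ` (SIGMA i:{1..n}. Sm i)"
    unfolding pair_idx_def by auto
  moreover have "finite (SIGMA i:{1..n}. Dm i)" "finite (SIGMA i:{1..n}. Sm i)"
    by (rule finite_SigmaI; use assms in auto)+
  ultimately show ?thesis by simp
qed

lemma sum_pair_idx:
  assumes "\<And>i. i \<in> {1..n} \<Longrightarrow> finite (Dm i) \<and> finite (Sm i)"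
  shows "(\<Sum>q\<in>pair_idx n Dm Sm. g q) = (\<Sum>i\<in>{1..n}. (\<Sum>l\<in>Dm i. g (True,i,l)) + (\<Sum>j\<in>Sm i. g (False,i,j)))"
proof -
  let ?A = "(\<lambda>(i,l). (True,i,l)) ` (SIGMA i:{1..n}. Dm i)"
  let ?B = "(\<lambda>(i,l). (False,i,l)) ` (SIGMA i:{1..n}. Sm i)"
  have e: "pair_idx n Dm Sm = ?A \<union> ?B"
    unfolding pair_idx_def by auto
  have fA: "finite (SIGMA i:{1..n}. Dm i)" "finite (SIGMA i:{1..n}. Sm i)"
    by (rule finite_SigmaI; use assms in auto)+
  have "(\<Sum>q\<in>pair_idx n Dm Sm. g q) = (\<Sum>q\<in>?A. g q) + (\<Sum>q\<in>?B. g q)"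
    unfolding e by (rule sum.union_disjoint) (use fA in auto)
  also have "(\<Sum>q\<in>?A. g q) = (\<Sum>(i,l)\<in>(SIGMA i:{1..n}. Dm i). g (True,i,l))"
    by (subst sum.reindex) (auto simp: inj_on_def case_prod_unfold)
  also have "\<dots> = (\<Sum>i\<in>{1..n}. \<Sum>l\<in>Dm i. g (True,i,l))"
    by (rule sum.Sigma[symmetric]) (use assms in auto)
  also have "(\<Sum>q\<in>?B. g q) = (\<Sum>(i,l)\<in>(SIGMA i:{1..n}. Sm i). g (False,i,l))"
    by (subst sum.reindex) (auto simp: inj_on_def case_prod_unfold)
  also have "\<dots> = (\<Sum>i\<in>{1..n}. \<Sum>l\<in>Sm i. g (False,i,l))"
    by (rule sum.Sigma[symmetric]) (use assms in auto)
  finally show ?thesis by (simp add: sum.distrib)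
qed

lemma primal_obj_alt:
  assumes "\<And>i. i \<in> {1..n} \<Longrightarrow> finite (Dm i) \<and> finite (Sm i)"
  shows "primal_obj n p x Dm Sm L U eta lam m =
    (\<Sum>q\<in>pair_idx n Dm Sm. sqp (tvec L U q - (\<Sum>k\<in>{1..p}. m k * Cmat x k q)))
     + lam * ((\<Sum>k\<in>{1..p}. m k) + eta / 2 * (\<Sum>k\<in>{1..p}. (m k)\<^sup>2))"
proof -
  have 1: "\<And>i l. sqp (tvec L U (True,i,l) - (\<Sum>k\<in>{1..p}. m k * Cmat x k (True,i,l))) = sq_hinge L (\<Sum>k\<in>{1..p}. m k * cvec x i l k)"
    by (simp add: sqp_def sq_hinge_def tvec_def Cmat_def)
  have 2: "\<And>i j. sqp (tvec L U (False,i,j) - (\<Sum>k\<in>{1..p}. m k * Cmat x k (False,i,j))) = sq_hinge (- U) (- (\<Sum>k\<in>{1..p}. m k * cvec x i j k))"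
    by (simp add: sqp_def sq_hinge_def tvec_def Cmat_def sum_negf)
  show ?thesis unfolding primal_obj_def
    apply (subst sum_pair_idx[OF assms], assumption)
    apply (simp only: 1 2)
    done
qed

lemma dual_obj_alt:
  assumes "lam * eta \<noteq> 0"
  shows "dual_obj n p x Dm Sm L U eta lam a =
    - 1/4 * (\<Sum>q\<in>pair_idx n Dm Sm. (a q)\<^sup>2) + (\<Sum>q\<in>pair_idx n Dm Sm. tvec L U q * a q)
    - 1 / (2 * lam * eta) * (\<Sum>k\<in>{1..p}. sqp ((\<Sum>q\<in>pair_idx n Dm Sm. Cmat x k q * a q) - lam))"
proof -
  have "lam * eta / 2 * ((1 / (lam * eta)) * pos_part z)\<^sup>2 = 1 / (2 * lam * eta) * sqp z" for z
    using assms by (simp add: sqp_def power2_eq_square field_simps)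
  hence "lam * eta / 2 * (\<Sum>k\<in>{1..p}. ((1 / (lam * eta)) * pos_part ((\<Sum>q\<in>pair_idx n Dm Sm. Cmat x k q * a q) - lam))\<^sup>2)
     = 1 / (2 * lam * eta) * (\<Sum>k\<in>{1..p}. sqp ((\<Sum>q\<in>pair_idx n Dm Sm. Cmat x k q * a q) - lam))"
    by (simp add: sum_distrib_left ac_simps)
  thus ?thesis unfolding dual_obj_def Let_def by simp
qed



lemma swap_lemma:
  fixes C :: "'b \<Rightarrow> 'a \<Rightarrow> real"
  shows "(\<Sum>q\<in>I. a q * (\<Sum>k\<in>P. d k * C k q)) = (\<Sum>j\<in>P. d j * (\<Sum>q\<in>I. C j q * a q))"
proof -
  have "(\<Sum>q\<in>I. a q * (\<Sum>k\<in>P. d k * C k q)) = (\<Sum>q\<in>I. \<Sum>k\<in>P. d k * (C k q * a q))"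
    by (simp add: sum_distrib_left ac_simps)
  also have "\<dots> = (\<Sum>k\<in>P. \<Sum>q\<in>I. d k * (C k q * a q))" by (rule sum.swap)
  also have "\<dots> = (\<Sum>j\<in>P. d j * (\<Sum>q\<in>I. C j q * a q))" by (simp add: sum_distrib_left)
  finally show ?thesis .
qed

lemma primal_pert:
  fixes C :: "'b \<Rightarrow> 'a \<Rightarrow> real"
  shows "(\<Sum>q\<in>I. sqp (t q - (\<Sum>k\<in>P. (m k + \<theta> * d k) * C k q)))
    \<le> (\<Sum>q\<in>I. sqp (t q - (\<Sum>k\<in>P. m k * C k q)))
       - \<theta> * (\<Sum>j\<in>P. d j * (\<Sum>q\<in>I. C j q * (2 * pos_part (t q - (\<Sum>k\<in>P. m k * C k q)))))
       + \<theta>\<^sup>2 * (\<Sum>q\<in>I. (\<Sum>k\<in>P. d k * C k q)\<^sup>2)"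
proof -
  define y where "y q = (\<Sum>k\<in>P. m k * C k q)" for q
  define v where "v q = (\<Sum>k\<in>P. d k * C k q)" for q
  have each: "sqp (t q - (\<Sum>k\<in>P. (m k + \<theta> * d k) * C k q))
     \<le> sqp (t q - y q) - \<theta> * ((2 * pos_part (t q - y q)) * v q) + \<theta>\<^sup>2 * (v q)\<^sup>2" for q
  proof -
    have "(\<Sum>k\<in>P. (m k + \<theta> * d k) * C k q) = y q + \<theta> * v q"
      by (simp add: y_def v_def algebra_simps sum.distrib sum_distrib_left)
    hence "t q - (\<Sum>k\<in>P. (m k + \<theta> * d k) * C k q) = (t q - y q) + (- \<theta> * v q)"
      by simp
    hence "sqp (t q - (\<Sum>k\<in>P. (m k + \<theta> * d k) * C k q)) \<le> sqp (t q - y q) + 2 * pos_part (t q - y q) * (- \<theta> * v q) + (- \<theta> * v q)\<^sup>2"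
      using sqp_upper by metis
    thus ?thesis by (simp add: power_mult_distrib algebra_simps)
  qed
  have "(\<Sum>q\<in>I. sqp (t q - (\<Sum>k\<in>P. (m k + \<theta> * d k) * C k q)))
     \<le> (\<Sum>q\<in>I. sqp (t q - y q) - \<theta> * ((2 * pos_part (t q - y q)) * v q) + \<theta>\<^sup>2 * (v q)\<^sup>2)"
    by (rule sum_mono) (rule each)
  also have "\<dots> = (\<Sum>q\<in>I. sqp (t q - y q)) - \<theta> * (\<Sum>q\<in>I. (2 * pos_part (t q - y q)) * v q) + \<theta>\<^sup>2 * (\<Sum>q\<in>I. (v q)\<^sup>2)"
    by (simp add: sum.distrib sum_subtractf sum_distrib_left)
  also have "(\<Sum>q\<in>I. (2 * pos_part (t q - y q)) * v q) = (\<Sum>j\<in>P. d j * (\<Sum>q\<in>I. C j q * (2 * pos_part (t q - y q))))"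
    unfolding v_def by (rule swap_lemma)
  finally show ?thesis unfolding y_def v_def .
qed

lemma dual_pert:
  fixes C :: "'b \<Rightarrow> 'a \<Rightarrow> real"
  shows "(\<Sum>k\<in>P. sqp ((\<Sum>q\<in>I. C k q * (a q + \<theta> * d q)) - lam))
    \<le> (\<Sum>k\<in>P. sqp ((\<Sum>q\<in>I. C k q * a q) - lam))
      + \<theta> * (\<Sum>k\<in>P. 2 * pos_part ((\<Sum>q\<in>I. C k q * a q) - lam) * (\<Sum>q\<in>I. C k q * d q))
      + \<theta>\<^sup>2 * (\<Sum>k\<in>P. (\<Sum>q\<in>I. C k q * d q)\<^sup>2)"
proof -
  have each: "sqp ((\<Sum>q\<in>I. C k q * (a q + \<theta> * d q)) - lam)
    \<le> sqp ((\<Sum>q\<in>I. C k q * a q) - lam) + \<theta> * (2 * pos_part ((\<Sum>q\<in>I. C k q * a q) - lam) * (\<Sum>q\<in>I. C k q * d q))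
      + \<theta>\<^sup>2 * (\<Sum>q\<in>I. C k q * d q)\<^sup>2" for k
  proof -
    have "(\<Sum>q\<in>I. C k q * (a q + \<theta> * d q)) - lam = ((\<Sum>q\<in>I. C k q * a q) - lam) + \<theta> * (\<Sum>q\<in>I. C k q * d q)"
      by (simp add: algebra_simps sum.distrib sum_distrib_left)
    hence "sqp ((\<Sum>q\<in>I. C k q * (a q + \<theta> * d q)) - lam) \<le> sqp ((\<Sum>q\<in>I. C k q * a q) - lam) + 2 * pos_part ((\<Sum>q\<in>I. C k q * a q) - lam) * (\<theta> * (\<Sum>q\<in>I. C k q * d q)) + (\<theta> * (\<Sum>q\<in>I. C k q * d q))\<^sup>2"
      using sqp_upper by metis
    thus ?thesis by (simp add: power_mult_distrib algebra_simps)
  qed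
  have "(\<Sum>k\<in>P. sqp ((\<Sum>q\<in>I. C k q * (a q + \<theta> * d q)) - lam)) \<le> (\<Sum>k\<in>P. sqp ((\<Sum>q\<in>I. C k q * a q) - lam) + \<theta> * (2 * pos_part ((\<Sum>q\<in>I. C k q * a q) - lam) * (\<Sum>q\<in>I. C k q * d q))
      + \<theta>\<^sup>2 * (\<Sum>q\<in>I. C k q * d q)\<^sup>2)"
    by (rule sum_mono) (rule each)
  also have "\<dots> = (\<Sum>k\<in>P. sqp ((\<Sum>q\<in>I. C k q * a q) - lam))
      + \<theta> * (\<Sum>k\<in>P. 2 * pos_part ((\<Sum>q\<in>I. C k q * a q) - lam) * (\<Sum>q\<in>I. C k q * d q))
      + \<theta>\<^sup>2 * (\<Sum>k\<in>P. (\<Sum>q\<in>I. C k q * d q)\<^sup>2)"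
    by (simp add: sum.distrib sum_distrib_left)
  finally show ?thesis .
qed


theorem theorem6:
  fixes n K p :: nat
    and x :: "nat \<Rightarrow> nat \<Rightarrow> real"
    and Dm Sm :: "nat \<Rightarrow> nat set"
    and L U eta lam lam0 eps :: real
    and a0star a0 :: "bool \<times> nat \<times> nat \<Rightarrow> real"
    and mstar :: "nat \<Rightarrow> real"
    and k :: nat
  assumes "n \<ge> 1" and "K \<ge> 1" and "p \<ge> 1"
    and "\<And>i k. i \<in> {1..n} \<Longrightarrow> k \<in> {1..p} \<Longrightarrow> x i k \<ge> 0"
    and "\<And>i. i \<in> {1..n} \<Longrightarrow> Dm i \<subseteq> {1..n} \<and> card (Dm i) = K"
    and "\<And>i. i \<in> {1..n} \<Longrightarrow> Sm i \<subseteq> {1..n} \<and> card (Sm i) = K"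
    and "L \<ge> U" and "U \<ge> 0" and "eta > 0"
    and "0 < lam" and "lam \<le> lam0"
    and "dual_feasible n Dm Sm a0star"
    and "\<And>a. dual_feasible n Dm Sm a \<Longrightarrow>
            dual_obj n p x Dm Sm L U eta lam0 a \<le> dual_obj n p x Dm Sm L U eta lam0 a0star"
    and "eps \<ge> 0"
    and "vnorm (pair_idx n Dm Sm) (\<lambda>q. a0 q - a0star q) \<le> eps"
    and "primal_feasible p mstar"
    and "\<And>m. primal_feasible p m \<Longrightarrow>
            primal_obj n p x Dm Sm L U eta lam mstar \<le> primal_obj n p x Dm Sm L U eta lam m"
    and "k \<in> {1..p}"
    and "lam0 * (2 * eps * vnorm (pair_idx n Dm Sm) (Cmat x k)
                 + vnorm (pair_idx n Dm Sm) a0 * vnorm (pair_idx n Dm Sm) (Cmat x k)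
                 + (\<Sum>q\<in>pair_idx n Dm Sm. Cmat x k q * a0 q))
          / (2 * lam0 + vnorm (pair_idx n Dm Sm) a0 * vnorm (pair_idx n Dm Sm) (Cmat x k)
                 - (\<Sum>q\<in>pair_idx n Dm Sm. Cmat x k q * a0 q)) \<le> lam"
  shows "mstar k = 0"
proof -
  have fin: "\<And>i. i \<in> {1..n} \<Longrightarrow> finite (Dm i) \<and> finite (Sm i)"
    using assms(5,6) by (meson finite_atLeastAtMost finite_subset)
  define I where "I = pair_idx n Dm Sm"
  define P where "P = {1..p}"
  define C where "C = Cmat x"
  define t where "t = tvec L U"
  have finI: "finite I" unfolding I_def by (rule finite_pair_idx) (use fin in blast)
  have finP: "finite P" unfolding P_def by simp
  have kP: "k \<in> P" using assms(18) by (simp add: P_def)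
  have lam0: "0 < lam0" using assms(10,11) by linarith
  have eta: "0 < eta" using assms(9) .
  have lam: "0 < lam" using assms(10) .
  have mnn: "\<And>j. j \<in> P \<Longrightarrow> 0 \<le> mstar j" using assms(16) by (simp add: primal_feasible_def P_def)
  have mout: "\<And>j. j \<notin> P \<Longrightarrow> mstar j = 0" using assms(16) by (simp add: primal_feasible_def P_def)
  define A where "A = a0star"
  have Ann: "\<And>q. q \<in> I \<Longrightarrow> 0 \<le> A q" using assms(12) by (simp add: dual_feasible_def I_def A_def)
  have Aout: "\<And>q. q \<notin> I \<Longrightarrow> A q = 0" using assms(12) unfolding dual_feasible_def I_def A_def by blast
  define y where "y q = (\<Sum>j\<in>P. mstar j * C j q)" for q
  define al where "al q = (if q \<in> I then 2 * pos_part (t q - y q) else 0)" for q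
  define z where "z j = (\<Sum>q\<in>I. C j q * al q)" for j
  define Z where "Z j = (\<Sum>q\<in>I. C j q * A q)" for j
  define m0 where "m0 j = (if j \<in> P then pos_part (Z j - lam0) / (lam0 * eta) else 0)" for j
  define s where "s = lam / lam0"
  have s0: "0 < s" using lam lam0 by (simp add: s_def)
  have s1: "s \<le> 1" using assms(11) lam0 by (simp add: s_def)
  have alnn: "\<And>q. 0 \<le> al q" by (simp add: al_def pos_part_def)

  have pobj: "\<And>m. primal_obj n p x Dm Sm L U eta lam m =
    (\<Sum>q\<in>I. sqp (t q - (\<Sum>k\<in>P. m k * C k q))) + lam * ((\<Sum>k\<in>P. m k) + eta / 2 * (\<Sum>k\<in>P. (m k)\<^sup>2))"
    unfolding I_def P_def C_def t_def by (rule primal_obj_alt) (use fin in blast)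
  have dobj: "\<And>a. dual_obj n p x Dm Sm L U eta lam0 a =
    - 1/4 * (\<Sum>q\<in>I. (a q)\<^sup>2) + (\<Sum>q\<in>I. t q * a q)
    - 1 / (2 * lam0 * eta) * (\<Sum>k\<in>P. sqp ((\<Sum>q\<in>I. C k q * a q) - lam0))"
    unfolding I_def P_def C_def t_def by (rule dual_obj_alt) (use lam0 eta in simp)

  have pvi: "0 \<le> (\<Sum>j\<in>P. (m' j - mstar j) * (lam + lam * eta * mstar j - z j))"
    if f: "primal_feasible p m'" for m'
  proof -
    define d where "d j = m' j - mstar j" for j
    define G where "G = (\<Sum>j\<in>P. d j * (lam + lam * eta * mstar j - z j))"
    define M where "M = (\<Sum>q\<in>I. (\<Sum>k\<in>P. d k * C k q)\<^sup>2) + lam * (eta / 2 * (\<Sum>k\<in>P. (d k)\<^sup>2))"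
    have "0 \<le> \<theta> * G + \<theta>\<^sup>2 * M" if th: "0 < \<theta>" "\<theta> \<le> 1" for \<theta>
    proof -
      define mt where "mt k = mstar k + \<theta> * d k" for k
      have feas: "primal_feasible p mt"
      proof -
        have "0 \<le> (1 - \<theta>) * mstar j + \<theta> * m' j" if "j \<in> {1..p}" for j
          using th that f mnn[of j] by (intro add_nonneg_nonneg mult_nonneg_nonneg) (auto simp: primal_feasible_def P_def)
        moreover have "mt j = (1 - \<theta>) * mstar j + \<theta> * m' j" for j
          by (simp add: mt_def d_def algebra_simps)
        ultimately show ?thesis using f mout unfolding primal_feasible_def P_def by auto
      qed
      have opt: "primal_obj n p x Dm Sm L U eta lam mstar \<le> primal_obj n p x Dm Sm L U eta lam mt"
        using assms(17) feas by blast
      have S: "(\<Sum>q\<in>I. sqp (t q - (\<Sum>k\<in>P. mt k * C k q)))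
          \<le> (\<Sum>q\<in>I. sqp (t q - y q)) - \<theta> * (\<Sum>j\<in>P. d j * z j) + \<theta>\<^sup>2 * (\<Sum>q\<in>I. (\<Sum>k\<in>P. d k * C k q)\<^sup>2)"
      proof -
        have zz: "(\<Sum>q\<in>I. C j q * (2 * pos_part (t q - (\<Sum>k\<in>P. mstar k * C k q)))) = z j" for j
          unfolding z_def by (rule sum.cong) (simp_all add: al_def y_def)
        show ?thesis using primal_pert[where I=I and t=t and P=P and m=mstar and \<theta>=\<theta> and d=d and C=C] unfolding mt_def zz y_def .
      qed
      have r1: "(\<Sum>k\<in>P. mt k) = (\<Sum>k\<in>P. mstar k) + \<theta> * (\<Sum>k\<in>P. d k)"
        by (simp add: mt_def sum.distrib sum_distrib_left)
      have r2: "(\<Sum>k\<in>P. (mt k)\<^sup>2) = (\<Sum>k\<in>P. (mstar k)\<^sup>2) + \<theta> * (2 * (\<Sum>k\<in>P. mstar k * d k)) + \<theta>\<^sup>2 * (\<Sum>k\<in>P. (d k)\<^sup>2)"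
      proof -
        have "(mt k)\<^sup>2 = (mstar k)\<^sup>2 + \<theta> * (2 * (mstar k * d k)) + \<theta>\<^sup>2 * (d k)\<^sup>2" for k
          by (simp add: mt_def power2_eq_square algebra_simps)
        thus ?thesis by (simp add: sum.distrib sum_distrib_left)
      qed
      have R: "(\<Sum>k\<in>P. mt k) + eta / 2 * (\<Sum>k\<in>P. (mt k)\<^sup>2)
          = (\<Sum>k\<in>P. mstar k) + eta / 2 * (\<Sum>k\<in>P. (mstar k)\<^sup>2)
            + \<theta> * ((\<Sum>k\<in>P. d k) + eta * (\<Sum>k\<in>P. mstar k * d k)) + \<theta>\<^sup>2 * (eta / 2 * (\<Sum>k\<in>P. (d k)\<^sup>2))"
        unfolding r1 r2 by (simp add: field_simps)
      have Gexp: "G = lam * ((\<Sum>k\<in>P. d k) + eta * (\<Sum>k\<in>P. mstar k * d k)) - (\<Sum>j\<in>P. d j * z j)"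
        by (simp add: G_def algebra_simps sum.distrib sum_subtractf sum_distrib_left)
      have "primal_obj n p x Dm Sm L U eta lam mt \<le> primal_obj n p x Dm Sm L U eta lam mstar + \<theta> * G + \<theta>\<^sup>2 * M"
      proof -
        have "primal_obj n p x Dm Sm L U eta lam mt = (\<Sum>q\<in>I. sqp (t q - (\<Sum>k\<in>P. mt k * C k q))) + lam * ((\<Sum>k\<in>P. mt k) + eta / 2 * (\<Sum>k\<in>P. (mt k)\<^sup>2))"
          by (rule pobj)
        also have "\<dots> \<le> (\<Sum>q\<in>I. sqp (t q - y q)) - \<theta> * (\<Sum>j\<in>P. d j * z j) + \<theta>\<^sup>2 * (\<Sum>q\<in>I. (\<Sum>k\<in>P. d k * C k q)\<^sup>2)
             + lam * ((\<Sum>k\<in>P. mstar k) + eta / 2 * (\<Sum>k\<in>P. (mstar k)\<^sup>2)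
            + \<theta> * ((\<Sum>k\<in>P. d k) + eta * (\<Sum>k\<in>P. mstar k * d k)) + \<theta>\<^sup>2 * (eta / 2 * (\<Sum>k\<in>P. (d k)\<^sup>2)))"
          unfolding R using S by linarith
        also have "\<dots> = primal_obj n p x Dm Sm L U eta lam mstar + \<theta> * G + \<theta>\<^sup>2 * M"
          unfolding pobj Gexp M_def y_def by (simp add: algebra_simps)
        finally show ?thesis .
      qed
      thus ?thesis using opt by linarith
    qed
    hence "0 \<le> G" by (rule small_theta)
    thus ?thesis by (simp add: G_def d_def)
  qed
  have dvi: "(\<Sum>q\<in>I. (- A q / 2 + t q) * (\<beta> q - A q)) - (\<Sum>j\<in>P. m0 j * (\<Sum>q\<in>I. C j q * (\<beta> q - A q))) \<le> 0"
    if f: "dual_feasible n Dm Sm \<beta>" for \<beta>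
  proof -
    define d where "d q = \<beta> q - A q" for q
    define G where "G = (\<Sum>q\<in>I. (- A q / 2 + t q) * d q) - (\<Sum>j\<in>P. m0 j * (\<Sum>q\<in>I. C j q * d q))"
    define M where "M = 1/4 * (\<Sum>q\<in>I. (d q)\<^sup>2) + 1 / (2 * lam0 * eta) * (\<Sum>k\<in>P. (\<Sum>q\<in>I. C k q * d q)\<^sup>2)"
    have "0 \<le> \<theta> * (- G) + \<theta>\<^sup>2 * M" if th: "0 < \<theta>" "\<theta> \<le> 1" for \<theta>
    proof -
      define aT where "aT q = A q + \<theta> * d q" for q
      have feas: "dual_feasible n Dm Sm aT"
      proof -
        have "0 \<le> (1 - \<theta>) * A q + \<theta> * \<beta> q" if "q \<in> I" for q
          using th that f Ann[of q] by (intro add_nonneg_nonneg mult_nonneg_nonneg) (auto simp: dual_feasible_def I_def)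
        moreover have "aT q = (1 - \<theta>) * A q + \<theta> * \<beta> q" for q
          by (simp add: aT_def d_def algebra_simps)
        ultimately show ?thesis using f Aout unfolding dual_feasible_def I_def by auto
      qed
      have opt: "dual_obj n p x Dm Sm L U eta lam0 aT \<le> dual_obj n p x Dm Sm L U eta lam0 A"
        using assms(13) feas unfolding A_def by blast
      have S: "(\<Sum>k\<in>P. sqp ((\<Sum>q\<in>I. C k q * aT q) - lam0))
        \<le> (\<Sum>k\<in>P. sqp (Z k - lam0))
          + \<theta> * (\<Sum>k\<in>P. 2 * pos_part (Z k - lam0) * (\<Sum>q\<in>I. C k q * d q))
          + \<theta>\<^sup>2 * (\<Sum>k\<in>P. (\<Sum>q\<in>I. C k q * d q)\<^sup>2)"
        using dual_pert[where P=P and I=I and C=C and a=A and \<theta>=\<theta> and d=d and lam=lam0]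
        unfolding aT_def Z_def .
      have mm: "1 / (2 * lam0 * eta) * (\<Sum>k\<in>P. 2 * pos_part (Z k - lam0) * (\<Sum>q\<in>I. C k q * d q))
          = (\<Sum>j\<in>P. m0 j * (\<Sum>q\<in>I. C j q * d q))"
        unfolding sum_distrib_left by (rule sum.cong) (use lam0 eta in \<open>simp_all add: m0_def field_simps\<close>)
      have q1: "(\<Sum>q\<in>I. (aT q)\<^sup>2) = (\<Sum>q\<in>I. (A q)\<^sup>2) + \<theta> * (2 * (\<Sum>q\<in>I. A q * d q)) + \<theta>\<^sup>2 * (\<Sum>q\<in>I. (d q)\<^sup>2)"
      proof -
        have "(aT q)\<^sup>2 = (A q)\<^sup>2 + \<theta> * (2 * (A q * d q)) + \<theta>\<^sup>2 * (d q)\<^sup>2" for q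
          by (simp add: aT_def power2_eq_square algebra_simps)
        thus ?thesis by (simp add: sum.distrib sum_distrib_left)
      qed
      have q2: "(\<Sum>q\<in>I. t q * aT q) = (\<Sum>q\<in>I. t q * A q) + \<theta> * (\<Sum>q\<in>I. t q * d q)"
        by (simp add: aT_def sum.distrib sum_distrib_left algebra_simps)
      have Gexp: "G = (\<Sum>q\<in>I. t q * d q) - 1/2 * (\<Sum>q\<in>I. A q * d q) - (\<Sum>j\<in>P. m0 j * (\<Sum>q\<in>I. C j q * d q))"
        by (simp add: G_def algebra_simps sum.distrib sum_subtractf sum_distrib_left sum_divide_distrib)
      have c0: "0 \<le> 1 / (2 * lam0 * eta)" using lam0 eta by simp
      have S': "1 / (2 * lam0 * eta) * (\<Sum>k\<in>P. sqp ((\<Sum>q\<in>I. C k q * aT q) - lam0))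
        \<le> 1 / (2 * lam0 * eta) * ((\<Sum>k\<in>P. sqp (Z k - lam0))
          + \<theta> * (\<Sum>k\<in>P. 2 * pos_part (Z k - lam0) * (\<Sum>q\<in>I. C k q * d q))
          + \<theta>\<^sup>2 * (\<Sum>k\<in>P. (\<Sum>q\<in>I. C k q * d q)\<^sup>2))"
        by (rule mult_left_mono[OF S c0])
      have "dual_obj n p x Dm Sm L U eta lam0 A + \<theta> * G - \<theta>\<^sup>2 * M \<le> dual_obj n p x Dm Sm L U eta lam0 aT"
      proof -
        have e1: "dual_obj n p x Dm Sm L U eta lam0 aT = - 1/4 * ((\<Sum>q\<in>I. (A q)\<^sup>2) + \<theta> * (2 * (\<Sum>q\<in>I. A q * d q)) + \<theta>\<^sup>2 * (\<Sum>q\<in>I. (d q)\<^sup>2))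
           + ((\<Sum>q\<in>I. t q * A q) + \<theta> * (\<Sum>q\<in>I. t q * d q))
           - 1 / (2 * lam0 * eta) * (\<Sum>k\<in>P. sqp ((\<Sum>q\<in>I. C k q * aT q) - lam0))"
          unfolding dobj q1 q2 ..
        have e2: "dual_obj n p x Dm Sm L U eta lam0 A = - 1/4 * (\<Sum>q\<in>I. (A q)\<^sup>2) + (\<Sum>q\<in>I. t q * A q)
           - 1 / (2 * lam0 * eta) * (\<Sum>k\<in>P. sqp (Z k - lam0))"
          unfolding dobj Z_def ..
        have e3: "1 / (2 * lam0 * eta) * ((\<Sum>k\<in>P. sqp (Z k - lam0))
          + \<theta> * (\<Sum>k\<in>P. 2 * pos_part (Z k - lam0) * (\<Sum>q\<in>I. C k q * d q))
          + \<theta>\<^sup>2 * (\<Sum>k\<in>P. (\<Sum>q\<in>I. C k q * d q)\<^sup>2))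
          = 1 / (2 * lam0 * eta) * (\<Sum>k\<in>P. sqp (Z k - lam0)) + \<theta> * (\<Sum>j\<in>P. m0 j * (\<Sum>q\<in>I. C j q * d q))
            + \<theta>\<^sup>2 * (1 / (2 * lam0 * eta) * (\<Sum>k\<in>P. (\<Sum>q\<in>I. C k q * d q)\<^sup>2))"
          unfolding mm[symmetric] by (simp add: algebra_simps)
        show ?thesis using S' unfolding e1 e2 e3 Gexp M_def by (simp add: algebra_simps)
      qed
      thus ?thesis using opt by linarith
    qed
    hence "0 \<le> - G" by (rule small_theta)
    thus ?thesis by (simp add: G_def d_def)
  qed
  have cfact: "(\<Sum>q\<in>I. (- al q / 2 + t q - y q) * (s * A q - al q)) \<le> 0"
  proof (rule sum_nonpos)
    fix q assume qI: "q \<in> I"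
    show "(- al q / 2 + t q - y q) * (s * A q - al q) \<le> 0"
    proof (cases "0 \<le> t q - y q")
      case True
      hence "al q = 2 * (t q - y q)" using qI by (simp add: al_def pos_part_def)
      hence "- al q / 2 + t q - y q = 0" by (simp add: field_simps)
      thus ?thesis by simp
    next
      case False
      hence "al q = 0" using qI by (simp add: al_def pos_part_def)
      moreover have "0 \<le> s * A q" using s0 Ann[OF qI] by simp
      ultimately show ?thesis using False by (simp add: mult_nonpos_nonneg)
    qed
  qed
  have bfeas: "dual_feasible n Dm Sm (\<lambda>q. al q / s)"
  proof -
    have "\<forall>q\<in>I. 0 \<le> al q / s" using alnn s0 by simp
    moreover have "\<forall>q. q \<notin> I \<longrightarrow> al q / s = 0" by (simp add: al_def)
    ultimately show ?thesis unfolding dual_feasible_def I_def by blast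
  qed
  have Cj: "(\<Sum>q\<in>I. C j q * (al q / s - A q)) = z j / s - Z j" for j
    by (simp add: z_def Z_def sum_subtractf sum_divide_distrib right_diff_distrib)
  have bfact: "(\<Sum>q\<in>I. (- A q / 2 + t q) * (al q / s - A q)) \<le> (\<Sum>j\<in>P. m0 j * (z j / s - Z j))"
    using dvi[OF bfeas] unfolding Cj by simp
  have m0feas: "primal_feasible p m0"
    unfolding primal_feasible_def using lam0 eta by (auto simp: m0_def P_def pos_part_def)
  have afact: "0 \<le> (\<Sum>j\<in>P. (m0 j - mstar j) * (lam + lam * eta * mstar j - z j))"
    by (rule pvi[OF m0feas])
  have monofact: "0 \<le> (\<Sum>j\<in>P. (mstar j - m0 j) * (lam + lam * eta * m0 j - s * Z j))"
  proof (rule sum_nonneg)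
    fix j assume jP: "j \<in> P"
    show "0 \<le> (mstar j - m0 j) * (lam + lam * eta * m0 j - s * Z j)"
    proof (cases "lam0 \<le> Z j")
      case True
      hence "lam * eta * m0 j = s * (Z j - lam0)" using jP lam0 eta
        by (simp add: m0_def pos_part_def s_def field_simps)
      hence "lam + lam * eta * m0 j - s * Z j = 0" using lam0 by (simp add: s_def field_simps)
      thus ?thesis by simp
    next
      case False
      hence "m0 j = 0" using jP by (simp add: m0_def pos_part_def)
      moreover have "s * Z j \<le> lam" using False s0 lam0
        by (simp add: s_def field_simps)
      ultimately show ?thesis using mnn[OF jP] by simp
    qed
  qed
  have swp: "(\<Sum>q\<in>I. y q * (s * A q - al q)) = (\<Sum>j\<in>P. mstar j * (s * Z j - z j))"
  proof -
    have "(\<Sum>q\<in>I. y q * (s * A q - al q)) = (\<Sum>q\<in>I. (s * A q - al q) * (\<Sum>k\<in>P. mstar k * C k q))"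
      by (simp add: y_def mult.commute)
    also have "\<dots> = (\<Sum>j\<in>P. mstar j * (\<Sum>q\<in>I. C j q * (s * A q - al q)))" by (rule swap_lemma)
    also have "\<dots> = (\<Sum>j\<in>P. mstar j * (s * Z j - z j))"
      by (simp add: z_def Z_def sum_subtractf sum_distrib_left right_diff_distrib mult.left_commute)
    finally show ?thesis .
  qed
  have T1: "(\<Sum>q\<in>I. (A q - al q) * (s * A q - al q)) = 2 * (\<Sum>q\<in>I. (- al q / 2 + t q - y q) * (s * A q - al q))
     + 2 * s * (\<Sum>q\<in>I. (- A q / 2 + t q) * (al q / s - A q)) + 2 * (\<Sum>q\<in>I. y q * (s * A q - al q))"
  proof -
    have "(\<Sum>q\<in>I. (A q - al q) * (s * A q - al q)) = (\<Sum>q\<in>I. 2 * ((- al q / 2 + t q - y q) * (s * A q - al q))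
     + 2 * s * ((- A q / 2 + t q) * (al q / s - A q)) + 2 * (y q * (s * A q - al q)))"
      by (rule sum.cong) (use s0 in \<open>simp_all add: field_simps\<close>)
    also have "\<dots> = 2 * (\<Sum>q\<in>I. (- al q / 2 + t q - y q) * (s * A q - al q))
     + 2 * s * (\<Sum>q\<in>I. (- A q / 2 + t q) * (al q / s - A q)) + 2 * (\<Sum>q\<in>I. y q * (s * A q - al q))"
      by (simp only: sum.distrib sum_distrib_left)
    finally show ?thesis .
  qed
  have P1: "s * (\<Sum>j\<in>P. m0 j * (z j / s - Z j)) = (\<Sum>j\<in>P. m0 j * (z j - s * Z j))"
    unfolding sum_distrib_left by (rule sum.cong) (use s0 in \<open>simp_all add: field_simps\<close>)
  have P2: "(\<Sum>j\<in>P. (m0 j - mstar j) * (lam + lam * eta * mstar j - z j))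
     + (\<Sum>j\<in>P. (mstar j - m0 j) * (lam + lam * eta * m0 j - s * Z j))
     + lam * eta * (\<Sum>j\<in>P. (m0 j - mstar j)\<^sup>2)
     = - (\<Sum>j\<in>P. m0 j * (z j - s * Z j)) - (\<Sum>j\<in>P. mstar j * (s * Z j - z j))"
  proof -
    have "(\<Sum>j\<in>P. (m0 j - mstar j) * (lam + lam * eta * mstar j - z j))
     + (\<Sum>j\<in>P. (mstar j - m0 j) * (lam + lam * eta * m0 j - s * Z j))
     + lam * eta * (\<Sum>j\<in>P. (m0 j - mstar j)\<^sup>2)
     = (\<Sum>j\<in>P. (m0 j - mstar j) * (lam + lam * eta * mstar j - z j)
          + (mstar j - m0 j) * (lam + lam * eta * m0 j - s * Z j) + lam * eta * (m0 j - mstar j)\<^sup>2)"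
      by (simp only: sum.distrib sum_distrib_left)
    also have "\<dots> = (\<Sum>j\<in>P. - (m0 j * (z j - s * Z j)) - mstar j * (s * Z j - z j))"
      by (rule sum.cong) (simp_all add: power2_eq_square algebra_simps)
    also have "\<dots> = - (\<Sum>j\<in>P. m0 j * (z j - s * Z j)) - (\<Sum>j\<in>P. mstar j * (s * Z j - z j))"
      by (simp add: sum_subtractf sum_negf)
    finally show ?thesis .
  qed
  have sqnn: "0 \<le> lam * eta * (\<Sum>j\<in>P. (m0 j - mstar j)\<^sup>2)"
    using lam eta by (simp add: sum_nonneg)
  have sb: "s * (\<Sum>q\<in>I. (- A q / 2 + t q) * (al q / s - A q)) \<le> s * (\<Sum>j\<in>P. m0 j * (z j / s - Z j))"
    using bfact s0 by simp
  have T: "(\<Sum>q\<in>I. (A q - al q) * (s * A q - al q)) \<le> 0"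
    using T1 cfact sb P1 P2 afact monofact sqnn swp by linarith
  define c where "c = (1 + s) / 2"
  define r where "r = (1 - s) / 2"
  have c0: "0 \<le> c" using s0 by (simp add: c_def)
  have r0: "0 \<le> r" using s1 by (simp add: r_def)
  have ball: "(\<Sum>q\<in>I. (al q - c * A q)\<^sup>2) \<le> r\<^sup>2 * (\<Sum>q\<in>I. (A q)\<^sup>2)"
  proof -
    have "(\<Sum>q\<in>I. (al q - c * A q)\<^sup>2) = (\<Sum>q\<in>I. (A q - al q) * (s * A q - al q) + r\<^sup>2 * (A q)\<^sup>2)"
      by (rule sum.cong) (simp_all add: c_def r_def power2_eq_square field_simps)
    also have "\<dots> = (\<Sum>q\<in>I. (A q - al q) * (s * A q - al q)) + r\<^sup>2 * (\<Sum>q\<in>I. (A q)\<^sup>2)"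
      by (simp only: sum.distrib sum_distrib_left)
    finally show ?thesis using T by linarith
  qed
  have L2ball: "L2_set (\<lambda>q. al q - c * A q) I \<le> r * L2_set A I"
  proof -
    have "L2_set (\<lambda>q. al q - c * A q) I \<le> sqrt (r\<^sup>2 * (\<Sum>q\<in>I. (A q)\<^sup>2))"
      unfolding L2_set_def by (rule real_sqrt_le_mono[OF ball])
    also have "\<dots> = r * L2_set A I" using r0 by (simp add: L2_set_def real_sqrt_mult)
    finally show ?thesis .
  qed
  have CS: "(\<Sum>q\<in>I. f q * g q) \<le> L2_set f I * L2_set g I" for f g :: "bool \<times> nat \<times> nat \<Rightarrow> real"
  proof -
    have "(\<Sum>q\<in>I. f q * g q) \<le> (\<Sum>q\<in>I. \<bar>f q\<bar> * \<bar>g q\<bar>)"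
      by (rule sum_mono) (simp add: abs_mult[symmetric])
    also have "\<dots> \<le> L2_set f I * L2_set g I" by (rule L2_set_mult_ineq)
    finally show ?thesis .
  qed
  define nC where "nC = L2_set (C k) I"
  define na0 where "na0 = L2_set a0 I"
  define nA where "nA = L2_set A I"
  define Ca0 where "Ca0 = (\<Sum>q\<in>I. C k q * a0 q)"
  have nC0: "0 \<le> nC" by (simp add: nC_def)
  have vn: "\<And>f. vnorm I f = L2_set f I" by (simp add: vnorm_def L2_set_def)
  have epsb: "L2_set (\<lambda>q. A q - a0 q) I \<le> eps"
  proof -
    have "L2_set (\<lambda>q. A q - a0 q) I = L2_set (\<lambda>q. a0 q - a0star q) I"
      by (simp add: L2_set_def A_def power2_commute)
    thus ?thesis using assms(15) vn unfolding I_def by simp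
  qed
  have zk: "z k = c * Z k + (\<Sum>q\<in>I. C k q * (al q - c * A q))"
  proof -
    have "z k = (\<Sum>q\<in>I. c * (C k q * A q) + C k q * (al q - c * A q))"
      unfolding z_def by (rule sum.cong) (simp_all add: algebra_simps)
    also have "\<dots> = c * Z k + (\<Sum>q\<in>I. C k q * (al q - c * A q))"
      by (simp only: sum.distrib sum_distrib_left Z_def)
    finally show ?thesis .
  qed
  have zk2: "z k \<le> c * Z k + nC * (r * nA)"
  proof -
    have "(\<Sum>q\<in>I. C k q * (al q - c * A q)) \<le> nC * L2_set (\<lambda>q. al q - c * A q) I"
      unfolding nC_def by (rule CS)
    also have "\<dots> \<le> nC * (r * nA)" unfolding nA_def by (rule mult_left_mono[OF L2ball nC0])
    finally show ?thesis using zk by linarith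
  qed
  have Zk: "Z k \<le> Ca0 + nC * eps"
  proof -
    have "Z k = Ca0 + (\<Sum>q\<in>I. C k q * (A q - a0 q))"
    proof -
      have "Z k = (\<Sum>q\<in>I. C k q * a0 q + C k q * (A q - a0 q))"
        unfolding Z_def by (rule sum.cong) (simp_all add: algebra_simps)
      thus ?thesis by (simp only: sum.distrib Ca0_def)
    qed
    moreover have "(\<Sum>q\<in>I. C k q * (A q - a0 q)) \<le> nC * L2_set (\<lambda>q. A q - a0 q) I"
      unfolding nC_def by (rule CS)
    moreover have "nC * L2_set (\<lambda>q. A q - a0 q) I \<le> nC * eps" by (rule mult_left_mono[OF epsb nC0])
    ultimately show ?thesis by linarith
  qed
  have nAb: "nA \<le> na0 + eps"
  proof -
    have "L2_set (\<lambda>q. a0 q + (A q - a0 q)) I \<le> L2_set a0 I + L2_set (\<lambda>q. A q - a0 q) I"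
      by (rule L2_set_triangle_ineq)
    thus ?thesis using epsb by (simp add: nA_def na0_def)
  qed
  have Ca0b: "Ca0 \<le> nC * na0" unfolding Ca0_def nC_def na0_def by (rule CS)
  have hyp: "lam0 * (2 * eps * nC + na0 * nC + Ca0) / (2 * lam0 + na0 * nC - Ca0) \<le> lam"
  proof -
    have vn': "\<And>J f. vnorm J f = L2_set f J" by (simp add: vnorm_def L2_set_def)
    show ?thesis unfolding nC_def na0_def Ca0_def I_def C_def vn'[symmetric] using assms(19) .
  qed
  have Dpos: "0 < 2 * lam0 + na0 * nC - Ca0" using Ca0b lam0 by (simp add: mult.commute)
  have hyp2: "lam0 * (2 * eps * nC + na0 * nC + Ca0) \<le> lam * (2 * lam0 + na0 * nC - Ca0)"
    using hyp Dpos by (simp add: pos_divide_le_eq)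
  define X where "X = c * (Ca0 + nC * eps) + nC * (r * (na0 + eps))"
  have zX: "z k \<le> X"
  proof -
    have "c * Z k \<le> c * (Ca0 + nC * eps)" by (rule mult_left_mono[OF Zk c0])
    moreover have "nC * (r * nA) \<le> nC * (r * (na0 + eps))"
      using nAb r0 nC0 by (intro mult_left_mono) auto
    ultimately show ?thesis using zk2 unfolding X_def by linarith
  qed
  have X2: "2 * lam0 * X = lam0 * (2 * eps * nC + na0 * nC + Ca0) + lam * Ca0 - lam * nC * na0"
    using lam0 by (simp add: X_def c_def r_def s_def field_simps)
  have "2 * lam0 * X \<le> 2 * lam0 * lam"
    using X2 hyp2 by (simp add: algebra_simps)
  hence Xl: "X \<le> lam" using lam0 by simp
  have zl: "z k \<le> lam" using zX Xl by linarith
  show ?thesis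
  proof (rule ccontr)
    assume ne: "mstar k \<noteq> 0"
    hence mk: "0 < mstar k" using mnn[OF kP] by simp
    define m' where "m' = mstar(k := 0)"
    have mf: "primal_feasible p m'"
      using assms(16) kP unfolding primal_feasible_def m'_def P_def by auto
    have "(\<Sum>j\<in>P. (m' j - mstar j) * (lam + lam * eta * mstar j - z j))
        = (\<Sum>j\<in>P. if j = k then - mstar k * (lam + lam * eta * mstar k - z k) else 0)"
      by (rule sum.cong) (simp_all add: m'_def)
    also have "\<dots> = - mstar k * (lam + lam * eta * mstar k - z k)" using finP kP by simp
    finally have "0 \<le> - mstar k * (lam + lam * eta * mstar k - z k)" using pvi[OF mf] by simp
    hence "lam + lam * eta * mstar k - z k \<le> 0" using mk
      by (simp add: mult_le_0_iff)
    moreover have "0 < lam * eta * mstar k" using lam eta mk by simp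
    ultimately show False using zl by linarith
  qed
qed

end
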